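(* In the setting described in the context, for $x,x'\in X_{\mathfrak L_1}$ one has $\psi_0(x)=\psi_0(x')$ if and only if $x_{[l,\infty)}=x'_{[l,\infty)}$ and there is a vertex $v\in V_L$ of $\mathfrak L_1$ with $\pi_1(x)_{[1,L]},\pi_1(x')_{[1,L]}\in B_L(\Lambda_1,v)$ and $\pi_1(x)_{[1,L]}\sim_v\pi_1(x')_{[1,L]}$.
   Context: $\mathbb Z_+=\{0,1,2,\dots\}$, $\mathbb N=\{1,2,\dots\}$. A $\lambda$-graph system $\mathfrak L=(V,E,\lambda,\iota)$ over a finite alphabet $\Sigma$ consists of finite nonempty pairwise disjoint vertex sets $V_l$ ($l\in\mathbb Z_+$); finite pairwise disjoint edge sets $E_{l,l+1}$, each $e\in E_{l,l+1}$ having a source $s(e)\in V_l$ and a terminal $t(e)\in V_{l+1}$; a labeling map $\lambda:E\to\Sigma$; and surjections $\iota:V_{l+1}\to V_l$; such that every vertex is the source of some edge, every vertex in $V_l$ ($l\ge1$) is the terminal of some edge, and (local property) for all $l\ge1$, $u\in V_{l-1}$, $v\in V_{l+1}$ there is a label-preserving bijection between $\{e\in E_{l,l+1}: \iota(s(e))=u,\ t(e)=v\}$ and $\{e\in E_{l-1,l}: s(e)=u,\ t(e)=\iota(v)\}$. Left-resolving: $t(e)=t(f)$, $\lambda(e)=\lambda(f)$ imply $e=f$. $\Omega_{\mathfrak L}=\{(u^l)_{l}\in\prod_l V_l: \iota(u^{l+1})=u^l\}$. $E_{\mathfrak L}$ = set of $(u,\alpha,w)\in\Omega_{\mathfrak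 L}\times\Sigma\times\Omega_{\mathfrak L}$ such that for each $l$ some $e\in E_{l,l+1}$ has $s(e)=u^l$, $t(e)=w^{l+1}$, $\lambda(e)=\alpha$. $X_{\mathfrak L}$ = set of $x=(\alpha_i,u_i)_{i\in\mathbb N}$ in $\Sigma\times\Omega_{\mathfrak L}$ with $(u_i,\alpha_{i+1},u_{i+1})\in E_{\mathfrak L}$ for all $i$ and $(u_0,\alpha_1,u_1)\in E_{\mathfrak L}$ for some $u_0$; relative product topology; $\sigma_{\mathfrak L}$ the left shift. For such $x$: $x_{[k,\infty)}=(\alpha_i,u_i)_{i\ge k}$; $\pi_{\mathfrak L}(x)=(\alpha_i)_{i\in\mathbb N}$, $\pi_{\mathfrak L}(x)_{[1,k]}=(\alpha_1,\dots,\alpha_k)$; $v^l_n(x)$ denotes the $l$-th coordinate $u_n^l$ of $u_n$. $X_\Lambda=\pi_{\mathfrak L}(X_{\mathfrak L})$, $B_k(X_\Lambda)$ its words of length $k$. Setting: $\mathfrak L_1,\mathfrak L_2$ are left-resolving $\lambda$-graph systems; write $\pi_i=\pi_{\mathfrak L_i}$, $\Lambda_i$ for the presented subshifts. $\psi_0:X_{\mathfrak L_1}\to X_{\mathfrak L_2}$ is a continuous surjection with $\sigma_{\mathfrak L_2}\circ\psi_0=\psi_0\circ\sigma_{\mathfrak L_1}$, and $1\le l\le L$ are integers such that (a) $\psi_0(x)=\psi_0(x')$ implies $x_{[l,\infty)}=x'_{[l,\infty)}$; (b) there is a map $\Psi:B_L(X_{\Lambda_1})\to B_l(X_{\Lambda_2})$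 with $\pi_2(\psi_0(x))_{[1,l]}=\Psi(\pi_1(x)_{[1,L]})$ for all $x\in X_{\mathfrak L_1}$. For $v\in V_L$ (vertices of $\mathfrak L_1$), $B_L(\Lambda_1,v)$ is the set of $\mu\in B_L(X_{\Lambda_1})$ such that $\mu=\pi_1(x)_{[1,L]}$ for some $x\in X_{\mathfrak L_1}$ with $v^L_L(x)=v$. For $\mu,\mu'\in B_L(\Lambda_1,v)$, $\mu\sim_v\mu'$ means: there exist $x,x'\in X_{\mathfrak L_1}$ with $\pi_1(x)_{[1,L]}=\mu$, $\pi_1(x')_{[1,L]}=\mu'$, $v^L_L(x)=v^L_L(x')=v$ and $\psi_0(x)=\psi_0(x')$ (this is an equivalence relation on $B_L(\Lambda_1,v)$). *)

theory Defs
  imports "HOL-Analysis.Analysis"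
begin

text \<open>A lambda-graph system: alphabet, vertex sets V_l, edge sets E_{l,l+1} (stored as Ed l),
  source, terminal, label and the maps iota : V_{l+1} -> V_l (a single function on vertices).\<close>
record ('v, 'e, 'a) lgraph =
  Alph :: "'a set"
  Vx   :: "nat \<Rightarrow> 'v set"
  Ed   :: "nat \<Rightarrow> 'e set"
  src  :: "'e \<Rightarrow> 'v"
  trg  :: "'e \<Rightarrow> 'v"
  lab  :: "'e \<Rightarrow> 'a"
  iota :: "'v \<Rightarrow> 'v"

definition lambda_graph_system :: "('v, 'e, 'a) lgraph \<Rightarrow> bool" where
  "lambda_graph_system G \<longleftrightarrow>
     finite (Alph G)
   \<and> (\<forall>l. finite (Vx G l) \<and> Vx G l \<noteq> {})
   \<and> (\<forall>l m. l \<noteq> m \<longrightarrow> Vx G l \<inter> Vx G m = {})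
   \<and> (\<forall>l. finite (Ed G l))
   \<and> (\<forall>l m. l \<noteq> m \<longrightarrow> Ed G l \<inter> Ed G m = {})
   \<and> (\<forall>l. \<forall>e\<in>Ed G l. src G e \<in> Vx G l \<and> trg G e \<in> Vx G (Suc l) \<and> lab G e \<in> Alph G)
   \<and> (\<forall>l. iota G ` Vx G (Suc l) = Vx G l)
   \<and> (\<forall>l. \<forall>v\<in>Vx G l. \<exists>e\<in>Ed G l. src G e = v)
   \<and> (\<forall>l. \<forall>v\<in>Vx G (Suc l). \<exists>e\<in>Ed G l. trg G e = v)
   \<and> (\<forall>l\<ge>1. \<forall>u\<in>Vx G (l - 1). \<forall>v\<in>Vx G (Suc l).
        \<exists>f. bij_betw f {e\<in>Ed G l. iota G (src G e) = u \<and> trg G e = v}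
                       {e\<in>Ed G (l - 1). src G e = u \<and> trg G e = iota G v}
            \<and> (\<forall>e\<in>{e\<in>Ed G l. iota G (src G e) = u \<and> trg G e = v}. lab G (f e) = lab G e))"

definition left_resolving :: "('v, 'e, 'a) lgraph \<Rightarrow> bool" where
  "left_resolving G \<longleftrightarrow>
     (\<forall>l m. \<forall>e\<in>Ed G l. \<forall>f\<in>Ed G m. trg G e = trg G f \<and> lab G e = lab G f \<longrightarrow> e = f)"

definition Omega :: "('v, 'e, 'a) lgraph \<Rightarrow> (nat \<Rightarrow> 'v) set" where
  "Omega G = {u. (\<forall>l. u l \<in> Vx G l) \<and> (\<forall>l. iota G (u (Suc l)) = u l)}"

definition EL :: "('v, 'e, 'a) lgraph \<Rightarrow> ((nat \<Rightarrow> 'v) \<times> 'a \<times> (nat \<Rightarrow> 'v)) set" where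
  "EL G = {(u, \<alpha>, w). u \<in> Omega G \<and> \<alpha> \<in> Alph G \<and> w \<in> Omega G \<and>
             (\<forall>l. \<exists>e\<in>Ed G l. src G e = u l \<and> trg G e = w (Suc l) \<and> lab G e = \<alpha>)}"

text \<open>Points of X_L are encoded 0-based: x i = (alpha_{i+1}, u_{i+1}).\<close>
definition XL :: "('v, 'e, 'a) lgraph \<Rightarrow> (nat \<Rightarrow> 'a \<times> (nat \<Rightarrow> 'v)) set" where
  "XL G = {x. (\<forall>i. (snd (x i), fst (x (Suc i)), snd (x (Suc i))) \<in> EL G)
              \<and> (\<exists>u0. (u0, fst (x 0), snd (x 0)) \<in> EL G)}"

definition XL_top :: "('v, 'e, 'a) lgraph \<Rightarrow> (nat \<Rightarrow> 'a \<times> (nat \<Rightarrow> 'v)) topology" where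
  "XL_top G = subtopology
     (product_topology (\<lambda>_. prod_topology (discrete_topology UNIV)
        (product_topology (\<lambda>_. discrete_topology UNIV) UNIV)) UNIV) (XL G)"

definition shift :: "(nat \<Rightarrow> 'b) \<Rightarrow> nat \<Rightarrow> 'b" where
  "shift x = (\<lambda>i. x (Suc i))"

definition piw :: "(nat \<Rightarrow> 'a \<times> 'u) \<Rightarrow> nat \<Rightarrow> 'a list" where
  "piw x k = map (\<lambda>i. fst (x i)) [0..<k]"

text \<open>x_{[k,infinity)} = x'_{[k,infinity)} (positions k, k+1, ... in 1-based numbering)\<close>
definition tail_eq :: "nat \<Rightarrow> (nat \<Rightarrow> 'b) \<Rightarrow> (nat \<Rightarrow> 'b) \<Rightarrow> bool" where
  "tail_eq k x x' \<longleftrightarrow> (\<forall>i. k \<le> Suc i \<longrightarrow> x i = x' i)"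

text \<open>v^l_n(x) = l-th coordinate of u_n (n \<ge> 1)\<close>
definition vcoord :: "nat \<Rightarrow> nat \<Rightarrow> (nat \<Rightarrow> 'a \<times> (nat \<Rightarrow> 'v)) \<Rightarrow> 'v" where
  "vcoord l n x = snd (x (n - 1)) l"

definition BLv :: "('v, 'e, 'a) lgraph \<Rightarrow> nat \<Rightarrow> 'v \<Rightarrow> 'a list set" where
  "BLv G L v = {\<mu>. \<exists>x\<in>XL G. \<mu> = piw x L \<and> vcoord L L x = v}"

definition simv :: "('v, 'e, 'a) lgraph \<Rightarrow> ((nat \<Rightarrow> 'a \<times> (nat \<Rightarrow> 'v)) \<Rightarrow> 'c)
                     \<Rightarrow> nat \<Rightarrow> 'v \<Rightarrow> 'a list \<Rightarrow> 'a list \<Rightarrow> bool" where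
  "simv G \<psi> L v \<mu> \<mu>' \<longleftrightarrow>
     (\<exists>x\<in>XL G. \<exists>x'\<in>XL G. piw x L = \<mu> \<and> piw x' L = \<mu>' \<and>
        vcoord L L x = v \<and> vcoord L L x' = v \<and> \<psi> x = \<psi> x')"

end

theory Submission
  imports Defs
begin

lemma XL_Omega: "x \<in> XL G \<Longrightarrow> snd (x i) \<in> Omega G"
  by (cases i) (auto simp: XL_def EL_def)

lemma shift_XL: "x \<in> XL G \<Longrightarrow> shift x \<in> XL G"
  unfolding XL_def shift_def by auto

lemma funpow_shift: "(shift ^^ k) x i = x (i + k)"
  by (induction k arbitrary: i) (auto simp: shift_def)

lemma funpow_shift_XL: "x \<in> XL G \<Longrightarrow> (shift ^^ k) x \<in> XL G"
  by (induction k) (auto simp: shift_XL)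

lemma comm_iter:
  assumes "\<forall>x\<in>XL G. \<psi> (shift x) = shift (\<psi> x)" "x \<in> XL G"
  shows "\<psi> ((shift ^^ k) x) = (shift ^^ k) (\<psi> x)"
  using assms by (induction k) (auto simp: funpow_shift_XL)

lemma back_step:
  assumes lr: "left_resolving G" and z: "z \<in> XL G" and z': "z' \<in> XL G"
    and s: "z (Suc i) = z' (Suc i)" and f: "fst (z i) = fst (z' i)"
  shows "z i = z' i"
proof -
  have "snd (z i) m = snd (z' i) m" for m
  proof -
    from z have "(snd (z i), fst (z (Suc i)), snd (z (Suc i))) \<in> EL G" by (auto simp: XL_def)
    then obtain e where e: "e \<in> Ed G m" "src G e = snd (z i) m"
      "trg G e = snd (z (Suc i)) (Suc m)" "lab G e = fst (z (Suc i))"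
      unfolding EL_def by blast
    from z' have "(snd (z' i), fst (z' (Suc i)), snd (z' (Suc i))) \<in> EL G" by (auto simp: XL_def)
    then obtain e' where e': "e' \<in> Ed G m" "src G e' = snd (z' i) m"
      "trg G e' = snd (z' (Suc i)) (Suc m)" "lab G e' = fst (z' (Suc i))"
      unfolding EL_def by blast
    have "e = e'" using lr e e' s unfolding left_resolving_def by metis
    thus ?thesis using e e' by simp
  qed
  thus ?thesis using f by (simp add: prod_eq_iff fun_eq_iff)
qed

lemma piw_nth: "piw x k = piw y k \<Longrightarrow> i < k \<Longrightarrow> fst (x i) = fst (y i)"
  unfolding piw_def by (metis (no_types, lifting) add_0 diff_zero length_map length_upt nth_map nth_upt)

theorem lemma7p5:
  fixes L1 :: "('v, 'e, 'a) lgraph" and L2 :: "('w, 'f, 'b) lgraph"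
    and \<psi>0 :: "(nat \<Rightarrow> 'a \<times> (nat \<Rightarrow> 'v)) \<Rightarrow> (nat \<Rightarrow> 'b \<times> (nat \<Rightarrow> 'w))"
    and l L :: nat
  assumes sys1: "lambda_graph_system L1" and lr1: "left_resolving L1"
    and sys2: "lambda_graph_system L2" and lr2: "left_resolving L2"
    and cont: "continuous_map (XL_top L1) (XL_top L2) \<psi>0"
    and onto: "\<psi>0 ` XL L1 = XL L2"
    and comm: "\<forall>x\<in>XL L1. \<psi>0 (shift x) = shift (\<psi>0 x)"
    and lL: "1 \<le> l" "l \<le> L"
    and a: "\<forall>x\<in>XL L1. \<forall>x'\<in>XL L1. \<psi>0 x = \<psi>0 x' \<longrightarrow> tail_eq l x x'"
    and b: "\<exists>\<Psi>. \<forall>x\<in>XL L1. piw (\<psi>0 x) l = \<Psi> (piw x L)"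
    and x: "x \<in> XL L1" and x': "x' \<in> XL L1"
  shows "\<psi>0 x = \<psi>0 x' \<longleftrightarrow>
           tail_eq l x x' \<and>
           (\<exists>v\<in>Vx L1 L. piw x L \<in> BLv L1 L v \<and> piw x' L \<in> BLv L1 L v \<and>
                         simv L1 \<psi>0 L v (piw x L) (piw x' L))"
proof
  assume eq: "\<psi>0 x = \<psi>0 x'"
  have te: "tail_eq l x x'" using a x x' eq by blast
  have xe: "x (L - 1) = x' (L - 1)" using te lL unfolding tail_eq_def by auto
  define v where "v = vcoord L L x"
  have vv: "vcoord L L x' = v" using xe by (simp add: v_def vcoord_def)
  have "v \<in> Vx L1 L" using XL_Omega[OF x, of "L - 1"] by (simp add: v_def vcoord_def Omega_def)
  moreover have "piw x L \<in> BLv L1 L v" using x by (auto simp: BLv_def v_def)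
  moreover have "piw x' L \<in> BLv L1 L v" using x' vv by (auto simp: BLv_def)
  moreover have "simv L1 \<psi>0 L v (piw x L) (piw x' L)"
    using x x' vv eq by (auto simp: simv_def v_def)
  ultimately show "tail_eq l x x' \<and>
           (\<exists>v\<in>Vx L1 L. piw x L \<in> BLv L1 L v \<and> piw x' L \<in> BLv L1 L v \<and>
                         simv L1 \<psi>0 L v (piw x L) (piw x' L))" using te by blast
next
  assume "tail_eq l x x' \<and>
           (\<exists>v\<in>Vx L1 L. piw x L \<in> BLv L1 L v \<and> piw x' L \<in> BLv L1 L v \<and>
                         simv L1 \<psi>0 L v (piw x L) (piw x' L))"
  then obtain v where te: "tail_eq l x x'" and sv: "simv L1 \<psi>0 L v (piw x L) (piw x' L)" by blast
  from sv obtain y y' where y: "y \<in> XL L1" "y' \<in> XL L1" "piw y L = piw x L" "piw y' L = piw x' L"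
    "\<psi>0 y = \<psi>0 y'" unfolding simv_def by blast
  from b obtain \<Psi> where \<Psi>: "\<forall>x\<in>XL L1. piw (\<psi>0 x) l = \<Psi> (piw x L)" by blast
  have pw: "piw (\<psi>0 x) l = piw (\<psi>0 x') l"
    using \<Psi> x x' y by metis
  define k where "k = l - 1"
  have "(shift ^^ k) x = (shift ^^ k) x'"
    using te lL by (auto simp: fun_eq_iff funpow_shift tail_eq_def k_def)
  hence "(shift ^^ k) (\<psi>0 x) = (shift ^^ k) (\<psi>0 x')"
    using comm_iter[OF comm x, of k] comm_iter[OF comm x', of k] by simp
  hence late: "\<And>i. k \<le> i \<Longrightarrow> \<psi>0 x i = \<psi>0 x' i"
    by (metis funpow_shift le_add_diff_inverse2)
  have zx: "\<psi>0 x \<in> XL L2" "\<psi>0 x' \<in> XL L2" using onto x x' by auto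
  have "\<forall>i. k - n \<le> i \<longrightarrow> \<psi>0 x i = \<psi>0 x' i" for n
  proof (induction n)
    case 0 thus ?case using late by simp
  next
    case (Suc n)
    show ?case
    proof (intro allI impI)
      fix i assume i: "k - Suc n \<le> i"
      show "\<psi>0 x i = \<psi>0 x' i"
      proof (cases "k - n \<le> i")
        case True thus ?thesis using Suc by blast
      next
        case False
        hence "k - n \<le> Suc i" "i < l" using i lL unfolding k_def by auto
        thus ?thesis using back_step[OF lr2 zx] Suc piw_nth[OF pw] by blast
      qed
    qed
  qed
  from this[of k] show "\<psi>0 x = \<psi>0 x'" by auto
qed

end
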